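(* Let $1\le p<\infty$ and $g\in H(\mathbb{D})$. Then the integral operator $I_g: S_2^p\to S_2^p$, $I_gf(z)=\int_0^z f'(w)g(w)\,dw$, is bounded if and only if $g\in S^p$.
   Context: $\mathbb{D}$ is the open unit disc, $H(\mathbb{D})$ the space of analytic functions on $\mathbb{D}$. For $1\le p<\infty$, $H^p$ is the Hardy space of $f\in H(\mathbb{D})$ with $\|f\|_{H^p}^p=\sup_{0<r<1}\frac{1}{2\pi}\int_0^{2\pi}|f(re^{i\theta})|^p\,d\theta<\infty$. $S^p=\{f\in H(\mathbb{D}): f'\in H^p\}$ with norm $\|f\|_{S^p}=|f(0)|+\|f'\|_{H^p}$. $S_2^p=\{f\in H(\mathbb{D}): f''\in H^p\}$ with norm $\|f\|_{S_2^p}=|f(0)|+|f'(0)|+\|f''\|_{H^p}$. *)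

theory Defs
  imports "HOL-Complex_Analysis.Complex_Analysis"
begin

definition hardy_mean :: "real \<Rightarrow> (complex \<Rightarrow> complex) \<Rightarrow> real \<Rightarrow> real" where
  "hardy_mean p f r = (1 / (2 * pi)) * integral {0..2*pi} (\<lambda>\<theta>. norm (f (of_real r * cis \<theta>)) powr p)"

definition hardy_space :: "real \<Rightarrow> (complex \<Rightarrow> complex) set" where
  "hardy_space p = {f. f holomorphic_on ball 0 1 \<and> bdd_above (hardy_mean p f ` {0<..<1})}"

definition hardy_norm :: "real \<Rightarrow> (complex \<Rightarrow> complex) \<Rightarrow> real" where
  "hardy_norm p f = (SUP r\<in>{0<..<1}. hardy_mean p f r) powr (1 / p)"

definition S_space :: "real \<Rightarrow> (complex \<Rightarrow> complex) set" where
  "S_space p = {f. f holomorphic_on ball 0 1 \<and> deriv f \<in> hardy_space p}"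

definition S2_space :: "real \<Rightarrow> (complex \<Rightarrow> complex) set" where
  "S2_space p = {f. f holomorphic_on ball 0 1 \<and> deriv (deriv f) \<in> hardy_space p}"

definition S2_norm :: "real \<Rightarrow> (complex \<Rightarrow> complex) \<Rightarrow> real" where
  "S2_norm p f = norm (f 0) + norm (deriv f 0) + hardy_norm p (deriv (deriv f))"

definition I_op :: "(complex \<Rightarrow> complex) \<Rightarrow> (complex \<Rightarrow> complex) \<Rightarrow> complex \<Rightarrow> complex" where
  "I_op g f z = contour_integral (linepath 0 z) (\<lambda>w. deriv f w * g w)"

definition I_op_bounded_S2 :: "real \<Rightarrow> (complex \<Rightarrow> complex) \<Rightarrow> bool" where
  "I_op_bounded_S2 p g \<longleftrightarrow> (\<exists>C. \<forall>f \<in> S2_space p.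
      I_op g f \<in> S2_space p \<and> S2_norm p (I_op g f) \<le> C * S2_norm p f)"

end

theory Submission
  imports Defs
begin

lemma core_identity:
  fixes h :: "complex \<Rightarrow> complex" and z :: complex and r :: real
  assumes holh: "h holomorphic_on ball 0 1" and zr: "norm z < r" and r1: "r < 1"
  shows "((\<lambda>u. deriv h u * (Ln (1 - z/u) - Ln (1 - cnj z * u / (of_real r)^2)))
           has_contour_integral (- (2 * of_real pi * \<i>) * (h z - h 0))) (circlepath 0 r)"
proof -
  define F where "F = deriv h"
  have r0: "r > 0" using zr norm_ge_zero[of z] by linarith
  define A where "A = {u. norm z < norm u} \<inter> ball (0::complex) 1"
  have openA: "open A" unfolding A_def
    by (intro open_Int open_ball) (simp add: open_Collect_less continuous_on_const continuous_on_norm_id)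
  have circA: "path_image (circlepath 0 r) \<subseteq> A"
    using r0 zr r1 by (auto simp: A_def)
  have Kok: "1 - z/u \<notin> \<real>\<^sub>\<le>\<^sub>0" if "u \<in> A" for u
  proof -
    have u0: "u \<noteq> 0" using that norm_ge_zero by (auto simp: A_def)
    have "norm (z/u) < 1" using that u0 by (auto simp: A_def norm_divide divide_less_eq)
    then have "Re (z/u) < 1" using complex_Re_le_cmod[of "z/u"] by linarith
    then have "Re (1 - z/u) > 0" by simp
    then show ?thesis by (simp add: complex_nonpos_Reals_iff)
  qed
  have derK: "((\<lambda>u. h u * Ln (1 - z/u)) has_field_derivative
        F u * Ln (1 - z/u) + h u * (1/(u - z) - 1/(u - 0))) (at u within A)" if "u \<in> A" for u
  proof -
    have u0: "u \<noteq> 0" and uz: "u \<noteq> z" using that norm_ge_zero by (auto simp: A_def)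
    have uB: "u \<in> ball 0 1" using that by (auto simp: A_def)
    have dh: "(h has_field_derivative F u) (at u)"
      unfolding F_def by (rule holomorphic_derivI[OF holh open_ball uB])
    have d1: "((\<lambda>u. 1 - z/u) has_field_derivative (z / u^2)) (at u)"
      using u0 by (auto intro!: derivative_eq_intros simp: power2_eq_square field_simps)
    have dL: "((\<lambda>u. Ln (1 - z/u)) has_field_derivative inverse (1 - z/u) * (z/u^2)) (at u)"
      by (rule DERIV_chain2[OF has_field_derivative_Ln[OF Kok[OF that]] d1])
    have eq: "inverse (1 - z/u) * (z/u^2) = 1/(u - z) - 1/(u - 0)"
      using u0 uz by (simp add: field_simps power2_eq_square)
    have "((\<lambda>u. h u * Ln (1 - z/u)) has_field_derivative
        F u * Ln (1 - z/u) + h u * (inverse (1 - z/u) * (z/u^2))) (at u)"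
      using DERIV_mult[OF dh dL] by (simp add: algebra_simps)
    then have "((\<lambda>u. h u * Ln (1 - z/u)) has_field_derivative
        F u * Ln (1 - z/u) + h u * (1/(u - z) - 1/(u - 0))) (at u)" by (simp only: eq)
    then show ?thesis by (rule has_field_derivative_at_within)
  qed
  have I1: "((\<lambda>u. F u * Ln (1 - z/u) + h u * (1/(u - z) - 1/(u - 0))) has_contour_integral 0) (circlepath 0 r)"
    by (rule Cauchy_theorem_primitive[OF derK]) (use circA in auto)
  have hc: "h holomorphic_on cball 0 r"
    by (rule holomorphic_on_subset[OF holh]) (use r1 in auto)
  have C1: "((\<lambda>u. h u/(u - z)) has_contour_integral (2 * of_real pi * \<i> * h z)) (circlepath 0 r)"
    by (rule Cauchy_integral_circlepath_simple[OF hc]) (use zr in simp)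
  have C2: "((\<lambda>u. h u/(u - 0)) has_contour_integral (2 * of_real pi * \<i> * h 0)) (circlepath 0 r)"
    by (rule Cauchy_integral_circlepath_simple[OF hc]) (use r0 in simp)
  have I2: "((\<lambda>u. h u * (1/(u - z) - 1/(u - 0))) has_contour_integral (2 * of_real pi * \<i> * h z - 2 * of_real pi * \<i> * h 0)) (circlepath 0 r)"
    using has_contour_integral_diff[OF C1 C2] by (simp add: algebra_simps)
  have IK: "((\<lambda>u. F u * Ln (1 - z/u)) has_contour_integral (- (2 * of_real pi * \<i>) * (h z - h 0))) (circlepath 0 r)"
    using has_contour_integral_diff[OF I1 I2] by (simp add: algebra_simps)
  define \<rho> where "\<rho> = (if z = 0 then 1 else min 1 (r^2 / norm z))"
  have r\<rho>: "r < \<rho>"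
  proof (cases "z = 0")
    case False
    then have "r < r^2 / norm z" using zr r0 by (simp add: field_simps power2_eq_square)
    then show ?thesis using False r1 by (simp add: \<rho>_def)
  qed (use r1 in \<open>simp add: \<rho>_def\<close>)
  have Lok: "1 - cnj z * u / (of_real r)^2 \<notin> \<real>\<^sub>\<le>\<^sub>0" if "u \<in> ball 0 \<rho>" for u
  proof -
    have "norm (cnj z * u / (of_real r)^2) < 1"
    proof (cases "z = 0")
      case False
      have "norm u < r^2 / norm z" using that False by (auto simp: \<rho>_def)
      then have "norm z * norm u < r^2" using False by (simp add: field_simps)
      then show ?thesis using r0 by (simp add: norm_divide norm_mult norm_power)
    qed simp
    then have "Re (cnj z * u / (of_real r)^2) < 1" using complex_Re_le_cmod[of "cnj z * u / (of_real r)^2"] by linarith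
    then have "Re (1 - cnj z * u / (of_real r)^2) > 0" by simp
    then show ?thesis by (simp add: complex_nonpos_Reals_iff)
  qed
  have holF: "F holomorphic_on ball 0 \<rho>"
    unfolding F_def by (rule holomorphic_on_subset[OF holomorphic_deriv[OF holh open_ball]]) (auto simp: \<rho>_def)
  have IL: "((\<lambda>u. F u * Ln (1 - cnj z * u / (of_real r)^2)) has_contour_integral 0) (circlepath 0 r)"
    by (rule Cauchy_theorem_convex_simple) (use Lok holF r\<rho> r0 in \<open>auto intro!: holomorphic_intros\<close>)
  show ?thesis
    using has_contour_integral_diff[OF IK IL] by (simp add: F_def algebra_simps)
qed

lemma cont_circle:
  fixes F :: "complex \<Rightarrow> complex"
  assumes "F holomorphic_on ball 0 1" "0 \<le> r" "r < 1"
  shows "continuous_on S (\<lambda>t. F (of_real r * cis t))"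
proof -
  have "continuous_on (ball 0 1) F" using assms(1) holomorphic_on_imp_continuous_on by blast
  moreover have "continuous_on S (\<lambda>t::real. complex_of_real r * cis t)"
    by (intro continuous_intros)
  moreover have "(\<lambda>t::real. complex_of_real r * cis t) ` S \<subseteq> ball 0 1"
    using assms by (auto simp: norm_mult)
  ultimately show ?thesis by (rule continuous_on_compose2)
qed

lemma core_bound:
  fixes h :: "complex \<Rightarrow> complex" and z :: complex and r :: real
  assumes holh: "h holomorphic_on ball 0 1" and zr: "norm z < r" and r1: "r < 1"
  shows "norm (h z - h 0) \<le> r * integral {0..2*pi} (\<lambda>t. norm (deriv h (of_real r * cis t)))"
proof -
  define F where "F = deriv h"
  have r0: "r > 0" using zr norm_ge_zero[of z] by linarith
  define \<Phi> where "\<Phi> = (\<lambda>u. F u * (Ln (1 - z/u) - Ln (1 - cnj z * u / (of_real r)^2)))"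
  have "(\<Phi> has_contour_integral (- (2 * of_real pi * \<i>) * (h z - h 0))) (circlepath 0 r)"
    unfolding \<Phi>_def F_def by (rule core_identity[OF holh zr r1])
  then have HI: "((\<lambda>t. \<Phi> (of_real r * cis t) * r * \<i> * cis t) has_integral (- (2 * of_real pi * \<i>) * (h z - h 0))) {0..2*pi}"
    unfolding circlepath_def by (subst (asm) has_contour_integral_part_circlepath_iff) auto
  have holF: "F holomorphic_on ball 0 1" unfolding F_def by (rule holomorphic_deriv[OF holh open_ball])
  have intF: "(\<lambda>t. 2 * pi * r * norm (F (of_real r * cis t))) integrable_on {0..2*pi}"
    by (intro integrable_continuous_interval continuous_intros cont_circle[OF holF]) (use r0 r1 in auto)
  have pw: "norm (\<Phi> (of_real r * cis t) * r * \<i> * cis t) \<le> 2 * pi * r * norm (F (of_real r * cis t))" for t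
  proof -
    define u where "u = of_real r * cis t"
    have nu: "norm u = r" using r0 by (simp add: u_def norm_mult)
    have u0: "u \<noteq> 0" using nu r0 by auto
    have Kok: "1 - z/u \<notin> \<real>\<^sub>\<le>\<^sub>0"
    proof -
      have "norm (z/u) < 1" using zr nu u0 r0 by (simp add: norm_divide divide_less_eq)
      then have "Re (z/u) < 1" using complex_Re_le_cmod[of "z/u"] by linarith
      then show ?thesis by (simp add: complex_nonpos_Reals_iff)
    qed
    have ucnj: "u * cnj u = (of_real r)^2" using complex_norm_square[of u] nu by simp
    have cu: "cnj u = (of_real r)^2 / u" using ucnj u0 by (simp add: eq_divide_eq mult.commute)
    have "cnj (1 - z/u) = 1 - cnj z / ((of_real r)^2 / u)" by (simp add: cu)
    also have "\<dots> = 1 - cnj z * u / (of_real r)^2" by (simp add: divide_divide_eq_right)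
    finally have "cnj (1 - z/u) = 1 - cnj z * u / (of_real r)^2" .
    then have "Ln (1 - cnj z * u / (of_real r)^2) = cnj (Ln (1 - z/u))"
      using cnj_Ln[OF Kok] by simp
    then have KL: "Ln (1 - z/u) - Ln (1 - cnj z * u / (of_real r)^2) = complex_of_real (2 * Im (Ln (1 - z/u))) * \<i>"
      by (simp add: complex_diff_cnj)
    have "\<bar>Im (Ln (1 - z/u))\<bar> \<le> pi"
    proof -
      have nz: "1 - z/u \<noteq> 0" using Kok by auto
      show ?thesis using mpi_less_Im_Ln[OF nz] Im_Ln_le_pi[OF nz] by (auto simp: abs_le_iff)
    qed
    then have nKL: "norm (Ln (1 - z/u) - Ln (1 - cnj z * u / (of_real r)^2)) \<le> 2 * pi"
      unfolding KL by (simp add: norm_mult)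
    have "norm (\<Phi> u * r * \<i> * cis t) = norm (F u) * norm (Ln (1 - z/u) - Ln (1 - cnj z * u / (of_real r)^2)) * r"
      using r0 by (simp add: \<Phi>_def norm_mult)
    also have "\<dots> \<le> norm (F u) * (2 * pi) * r"
      using nKL r0 by (intro mult_right_mono mult_left_mono) auto
    finally show ?thesis by (simp add: u_def algebra_simps)
  qed
  have "norm (integral {0..2*pi} (\<lambda>t. \<Phi> (of_real r * cis t) * r * \<i> * cis t))
        \<le> integral {0..2*pi} (\<lambda>t. 2 * pi * r * norm (F (of_real r * cis t)))"
    by (rule integral_norm_bound_integral[OF has_integral_integrable[OF HI] intF pw])
  then have "norm (- (2 * of_real pi * \<i>) * (h z - h 0)) \<le> (2 * pi * r) * integral {0..2*pi} (\<lambda>t. norm (F (of_real r * cis t)))"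
    using integral_unique[OF HI] by simp
  moreover have "norm (- (2 * of_real pi * \<i>) * (h z - h 0)) = 2 * pi * norm (h z - h 0)"
    by (simp only: norm_mult norm_minus_cancel norm_of_real norm_ii) simp
  ultimately have "2 * pi * norm (h z - h 0) \<le> 2 * pi * (r * integral {0..2*pi} (\<lambda>t. norm (F (of_real r * cis t))))"
    by (simp add: mult.assoc)
  then show ?thesis unfolding F_def by simp
qed


lemma pw_powr:
  fixes x \<tau> p :: real
  assumes "0 \<le> x" "0 < \<tau>" "1 \<le> p"
  shows "x \<le> \<tau> + \<tau> powr (1 - p) * x powr p"
proof (cases "x \<le> \<tau>")
  case True then show ?thesis by (simp add: add_increasing2)
next
  case False
  then have x0: "x > 0" using assms by linarith
  have "1 \<le> (x / \<tau>) powr (p - 1)"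
    using False assms by (intro ge_one_powr_ge_zero) auto
  then have "x \<le> x * (x / \<tau>) powr (p - 1)" using x0 by simp
  also have "\<dots> = \<tau> powr (1 - p) * x powr p"
    using x0 assms by (simp add: powr_divide powr_diff powr_minus divide_simps powr_add[symmetric])
  finally show ?thesis using assms by (simp add: add_increasing)
qed

lemma L1_le_hardy:
  fixes F :: "complex \<Rightarrow> complex"
  assumes p: "1 \<le> p" and holF: "F holomorphic_on ball 0 1"
    and bdd: "bdd_above (hardy_mean p F ` {0<..<1})" and r: "0 < r" "r < 1"
  shows "integral {0..2*pi} (\<lambda>t. norm (F (of_real r * cis t))) \<le> 4 * pi * hardy_norm p F"
proof -
  define S where "S = (SUP r\<in>{0<..<1}. hardy_mean p F r)"
  define N where "N = hardy_norm p F"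
  have NS: "N = S powr (1/p)" by (simp add: N_def S_def hardy_norm_def)
  have contn: "continuous_on {0..2*pi} (\<lambda>t. norm (F (of_real r * cis t)))"
    by (intro continuous_intros cont_circle[OF holF]) (use r in auto)
  have int1: "(\<lambda>t. norm (F (of_real r * cis t))) integrable_on {0..2*pi}"
    by (rule integrable_continuous_interval[OF contn])
  have contp: "continuous_on {0..2*pi} (\<lambda>t. norm (F (of_real r * cis t)) powr p)"
    by (rule continuous_on_powr'[OF contn]) (use p in auto)
  have intp: "(\<lambda>t. norm (F (of_real r * cis t)) powr p) integrable_on {0..2*pi}"
    by (rule integrable_continuous_interval[OF contp])
  have mean: "hardy_mean p F r = (1/(2*pi)) * integral {0..2*pi} (\<lambda>t. norm (F (of_real r * cis t)) powr p)"
    by (simp add: hardy_mean_def)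
  have mS: "hardy_mean p F r \<le> S"
    unfolding S_def by (rule cSUP_upper[OF _ bdd]) (use r in auto)
  have Ip0: "0 \<le> integral {0..2*pi} (\<lambda>t. norm (F (of_real r * cis t)) powr p)"
    by (rule integral_nonneg[OF intp]) auto
  have S0: "0 \<le> S" using mS Ip0 mean by (smt (verit, best) divide_nonneg_nonneg mult_nonneg_nonneg pi_gt_zero)
  have IpS: "integral {0..2*pi} (\<lambda>t. norm (F (of_real r * cis t)) powr p) \<le> 2 * pi * S"
    using mS mean by (simp add: field_simps)
  have key: "integral {0..2*pi} (\<lambda>t. norm (F (of_real r * cis t))) \<le> 2 * pi * \<tau> + \<tau> powr (1 - p) * (2 * pi * S)"
    if \<tau>: "\<tau> > 0" for \<tau>
  proof -
    have "integral {0..2*pi} (\<lambda>t. norm (F (of_real r * cis t)))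
        \<le> integral {0..2*pi} (\<lambda>t. \<tau> + \<tau> powr (1 - p) * norm (F (of_real r * cis t)) powr p)"
      by (rule integral_le[OF int1]) (use integrable_on_cmult_left[OF intp, of "\<tau> powr (1 - p)"] \<tau> p pw_powr in \<open>auto intro!: integrable_add\<close>)
    also have "\<dots> = 2 * pi * \<tau> + \<tau> powr (1 - p) * integral {0..2*pi} (\<lambda>t. norm (F (of_real r * cis t)) powr p)"
    proof -
      have "integral {0..2*pi} (\<lambda>t. \<tau> + \<tau> powr (1 - p) * norm (F (of_real r * cis t)) powr p)
          = integral {0..2*pi} (\<lambda>t. \<tau>) + integral {0..2*pi} (\<lambda>t. \<tau> powr (1 - p) * norm (F (of_real r * cis t)) powr p)"
        by (rule integral_add) (use integrable_on_cmult_left[OF intp, of "\<tau> powr (1 - p)"] in auto)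
      then show ?thesis by simp
    qed
    also have "\<dots> \<le> 2 * pi * \<tau> + \<tau> powr (1 - p) * (2 * pi * S)"
      using IpS by (intro add_left_mono mult_left_mono) auto
    finally show ?thesis .
  qed
  show ?thesis
  proof (cases "S = 0")
    case True
    have "integral {0..2*pi} (\<lambda>t. norm (F (of_real r * cis t))) \<le> 0 + e" if "e > 0" for e
      using key[of "e / (2*pi)"] that True by simp
    then have "integral {0..2*pi} (\<lambda>t. norm (F (of_real r * cis t))) \<le> 0" by (rule field_le_epsilon)
    moreover have "0 \<le> N" by (simp add: NS)
    ultimately show ?thesis unfolding N_def by (smt (verit) mult_nonneg_nonneg pi_gt_zero)
  next
    case False
    then have Sp: "S > 0" using S0 by simp
    then have Np: "N > 0" by (simp add: NS)
    have "N powr (1 - p) * S = N powr (1 - p) * N powr p"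
      using Sp p by (simp add: NS powr_powr)
    also have "\<dots> = N" using Np by (simp add: powr_add[symmetric])
    finally have eq: "N powr (1 - p) * S = N" .
    have "integral {0..2*pi} (\<lambda>t. norm (F (of_real r * cis t))) \<le> 2 * pi * N + N powr (1 - p) * (2 * pi * S)"
      by (rule key[OF Np])
    also have "\<dots> = 4 * pi * N" using eq by (simp add: algebra_simps)
    finally show ?thesis unfolding N_def .
  qed
qed

lemma sup_bound:
  fixes h :: "complex \<Rightarrow> complex"
  assumes p: "1 \<le> p" and holh: "h holomorphic_on ball 0 1" and hp: "deriv h \<in> hardy_space p"
    and z: "z \<in> ball 0 1"
  shows "norm (h z) \<le> norm (h 0) + 4 * pi * hardy_norm p (deriv h)"
proof -
  define r where "r = (1 + norm z) / 2"
  have nz: "0 \<le> norm z" by simp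
  have zr: "norm z < r" and r1: "r < 1" using z nz by (auto simp: r_def)
  have r0: "0 < r" unfolding r_def by (simp add: add_pos_nonneg)
  have holF: "deriv h holomorphic_on ball 0 1" by (rule holomorphic_deriv[OF holh open_ball])
  have I0: "0 \<le> integral {0..2*pi} (\<lambda>t. norm (deriv h (of_real r * cis t)))"
    by (rule integral_nonneg) (use cont_circle[OF holF] r0 r1 in \<open>auto intro!: integrable_continuous_interval continuous_intros\<close>)
  have "norm (h z - h 0) \<le> r * integral {0..2*pi} (\<lambda>t. norm (deriv h (of_real r * cis t)))"
    by (rule core_bound[OF holh zr r1])
  also have "\<dots> \<le> integral {0..2*pi} (\<lambda>t. norm (deriv h (of_real r * cis t)))"
    using I0 r1 r0 by (intro mult_left_le_one_le) auto
  also have "\<dots> \<le> 4 * pi * hardy_norm p (deriv h)"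
    by (rule L1_le_hardy[OF p holF _ r0 r1]) (use hp in \<open>simp add: hardy_space_def\<close>)
  finally show ?thesis using norm_triangle_sub[of "h z" "h 0"] by linarith
qed


lemma I_op_deriv:
  fixes f g :: "complex \<Rightarrow> complex"
  assumes holf: "f holomorphic_on ball 0 1" and holg: "g holomorphic_on ball 0 1"
    and w: "w \<in> ball 0 1"
  shows "(I_op g f has_field_derivative deriv f w * g w) (at w)"
proof -
  define \<phi> where "\<phi> = (\<lambda>w. deriv f w * g w)"
  have hol\<phi>: "\<phi> holomorphic_on ball 0 1"
    unfolding \<phi>_def by (intro holomorphic_intros holf holg) auto
  have cont: "continuous_on (ball 0 1) \<phi>" using hol\<phi> holomorphic_on_imp_continuous_on by blast
  have seg: "closed_segment 0 y \<subseteq> ball (0::complex) 1" if "y \<in> ball 0 1" for y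
    using that by (simp add: closed_segment_subset convex_ball)
  have zer: "contour_integral (linepath 0 b) \<phi> + contour_integral (linepath b c) \<phi> +
             contour_integral (linepath c 0) \<phi> = 0" if "closed_segment b c \<subseteq> ball 0 1" for b c
  proof -
    have abcs: "convex hull {0, b, c} \<subseteq> ball 0 1"
      by (rule starlike_convex_subset[OF _ that seg]) auto
    have "(\<phi> has_contour_integral 0) (linepath 0 b +++ linepath b c +++ linepath c 0)"
      by (rule Cauchy_theorem_triangle) (rule holomorphic_on_subset[OF hol\<phi> abcs])
    then show ?thesis using has_chain_integral_chain_integral3 by blast
  qed
  have "((\<lambda>x. contour_integral (linepath 0 x) \<phi>) has_field_derivative \<phi> w) (at w)"
    by (rule triangle_contour_integrals_starlike_primitive[OF cont _ open_ball w seg zer]) auto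
  then show ?thesis unfolding I_op_def \<phi>_def by simp
qed

lemma powr_sum_le:
  fixes a b p :: real
  assumes "0 \<le> a" "0 \<le> b" "0 < p"
  shows "(a + b) powr p \<le> 2 powr p * (a powr p + b powr p)"
proof -
  have "(a + b) powr p \<le> (2 * max a b) powr p"
    using assms by (intro powr_mono2) auto
  also have "\<dots> = 2 powr p * max a b powr p" using assms by (simp add: powr_mult)
  also have "\<dots> \<le> 2 powr p * (a powr p + b powr p)"
    by (intro mult_left_mono) (auto simp: max_def)
  finally show ?thesis .
qed

lemma powr_sum_le_small:
  fixes a b q :: real
  assumes "0 \<le> a" "0 \<le> b" "0 < q" "q \<le> 1"
  shows "(a + b) powr q \<le> 2 * (a powr q + b powr q)"
proof -
  have "2 powr q \<le> 2 powr 1" using assms by (intro powr_mono) auto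
  then have "2 powr q \<le> 2" by simp
  then have "2 powr q * (a powr q + b powr q) \<le> 2 * (a powr q + b powr q)"
    by (intro mult_right_mono) auto
  then show ?thesis using powr_sum_le[OF assms(1-3)] by linarith
qed

lemma mean_integrable:
  fixes F :: "complex \<Rightarrow> complex"
  assumes "F holomorphic_on ball 0 1" "0 < p" "0 \<le> r" "r < 1"
  shows "(\<lambda>t. norm (F (of_real r * cis t)) powr p) integrable_on {0..2*pi}"
  by (rule integrable_continuous_interval, rule continuous_on_powr')
     (use assms in \<open>auto intro!: continuous_intros cont_circle\<close>)

lemma mean_nonneg:
  fixes F :: "complex \<Rightarrow> complex"
  assumes "F holomorphic_on ball 0 1" "0 < p" "0 \<le> r" "r < 1"
  shows "0 \<le> hardy_mean p F r"
  unfolding hardy_mean_def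
  by (intro mult_nonneg_nonneg integral_nonneg mean_integrable[OF assms]) auto

lemma mean_cong:
  fixes u v :: "complex \<Rightarrow> complex"
  assumes "\<And>z. z \<in> ball 0 1 \<Longrightarrow> u z = v z" "0 \<le> r" "r < 1"
  shows "hardy_mean p u r = hardy_mean p v r"
proof -
  have "u (of_real r * cis t) = v (of_real r * cis t)" for t
    using assms by (intro assms(1)) (auto simp: norm_mult)
  then show ?thesis unfolding hardy_mean_def by simp
qed

lemma mean_le_comb:
  fixes u v w :: "complex \<Rightarrow> complex"
  assumes hu: "u holomorphic_on ball 0 1" and hv: "v holomorphic_on ball 0 1" and hw: "w holomorphic_on ball 0 1"
    and p: "0 < p" and ab: "0 \<le> a" "0 \<le> b"
    and pt: "\<And>z. z \<in> ball 0 1 \<Longrightarrow> norm (u z) powr p \<le> a * norm (v z) powr p + b * norm (w z) powr p"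
    and r: "0 \<le> r" "r < 1"
  shows "hardy_mean p u r \<le> a * hardy_mean p v r + b * hardy_mean p w r"
proof -
  note iu = mean_integrable[OF hu p r] and iv = mean_integrable[OF hv p r] and iw = mean_integrable[OF hw p r]
  have iv': "(\<lambda>t. a * norm (v (of_real r * cis t)) powr p) integrable_on {0..2*pi}"
    using integrable_on_cmult_left[OF iv, of a] by simp
  have iw': "(\<lambda>t. b * norm (w (of_real r * cis t)) powr p) integrable_on {0..2*pi}"
    using integrable_on_cmult_left[OF iw, of b] by simp
  have "integral {0..2*pi} (\<lambda>t. norm (u (of_real r * cis t)) powr p)
      \<le> integral {0..2*pi} (\<lambda>t. a * norm (v (of_real r * cis t)) powr p + b * norm (w (of_real r * cis t)) powr p)"
    by (rule integral_le[OF iu integrable_add[OF iv' iw']]) (intro pt, use r in \<open>auto simp: norm_mult\<close>)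
  also have "\<dots> = a * integral {0..2*pi} (\<lambda>t. norm (v (of_real r * cis t)) powr p) + b * integral {0..2*pi} (\<lambda>t. norm (w (of_real r * cis t)) powr p)"
    by (simp add: integral_add[OF iv' iw'])
  finally show ?thesis unfolding hardy_mean_def by (simp add: field_simps)
qed


lemma sup_nonneg:
  fixes F :: "complex \<Rightarrow> complex"
  assumes "F holomorphic_on ball 0 1" "0 < p" "bdd_above (hardy_mean p F ` {0<..<1})"
  shows "0 \<le> (SUP r\<in>{0<..<1}. hardy_mean p F r)"
proof -
  have "0 \<le> hardy_mean p F (1/2)" by (rule mean_nonneg) (use assms in auto)
  also have "\<dots> \<le> (SUP r\<in>{0<..<1}. hardy_mean p F r)" by (rule cSUP_upper[OF _ assms(3)]) auto
  finally show ?thesis .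
qed

theorem theorem4p2:
  fixes p :: real and g :: "complex \<Rightarrow> complex"
  assumes "1 \<le> p" and "g holomorphic_on ball 0 1"
  shows "I_op_bounded_S2 p g \<longleftrightarrow> g \<in> S_space p"
proof
  note p1 = assms(1) and holg = assms(2)
  have p0: "0 < p" using p1 by linarith
  have holdg: "deriv g holomorphic_on ball 0 1" by (rule holomorphic_deriv[OF holg open_ball])
  {
    assume "I_op_bounded_S2 p g"
    then obtain C where C: "\<And>f. f \<in> S2_space p \<Longrightarrow> I_op g f \<in> S2_space p"
      unfolding I_op_bounded_S2_def by blast
    define f0 where "f0 = (\<lambda>z::complex. z)"
    have df0: "deriv f0 = (\<lambda>z. 1)" by (simp add: f0_def)
    have "hardy_mean p (\<lambda>z. 0) r = 0" for r using p0 by (simp add: hardy_mean_def)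
    then have "(\<lambda>z::complex. 0::complex) \<in> hardy_space p"
      unfolding hardy_space_def by (auto intro!: bdd_aboveI2[where M=0])
    then have "f0 \<in> S2_space p" by (simp add: S2_space_def df0 f0_def)
    then have "I_op g f0 \<in> S2_space p" by (rule C)
    then have hp: "bdd_above (hardy_mean p (deriv (deriv (I_op g f0))) ` {0<..<1})"
      by (simp add: S2_space_def hardy_space_def)
    have d1: "deriv (I_op g f0) w = g w" if "w \<in> ball 0 1" for w
      using I_op_deriv[of f0 g w] that holg by (simp add: f0_def DERIV_imp_deriv)
    have d2: "deriv (deriv (I_op g f0)) w = deriv g w" if "w \<in> ball 0 1" for w
    proof -
      have "(g has_field_derivative deriv g w) (at w)" by (rule holomorphic_derivI[OF holg open_ball that])
      then have "(deriv (I_op g f0) has_field_derivative deriv g w) (at w)"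
        by (rule has_field_derivative_transform_within_open[OF _ open_ball that]) (simp add: d1)
      then show ?thesis by (rule DERIV_imp_deriv)
    qed
    have "hardy_mean p (deriv (deriv (I_op g f0))) ` {0<..<1} = hardy_mean p (deriv g) ` {0<..<1}"
      by (intro image_cong refl mean_cong) (use d2 in auto)
    with hp show "g \<in> S_space p"
      by (simp add: S_space_def hardy_space_def holg holdg)
  }
  {
    assume gS: "g \<in> S_space p"
    then have dgH: "deriv g \<in> hardy_space p" by (simp add: S_space_def)
    then have bddg: "bdd_above (hardy_mean p (deriv g) ` {0<..<1})" by (simp add: hardy_space_def)
    define Sg where "Sg = (SUP r\<in>{0<..<1}. hardy_mean p (deriv g) r)"
    define Ng where "Ng = hardy_norm p (deriv g)"
    have NgS: "Ng = Sg powr (1/p)" by (simp add: Ng_def Sg_def hardy_norm_def)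
    have Sg0: "0 \<le> Sg" unfolding Sg_def by (rule sup_nonneg[OF holdg p0 bddg])
    have Ng0: "0 \<le> Ng" by (simp add: NgS)
    define G0 where "G0 = norm (g 0) + 4 * pi * Ng"
    have G00: "0 \<le> G0" using Ng0 by (simp add: G0_def)
    have gb: "norm (g w) \<le> G0" if "w \<in> ball 0 1" for w
      unfolding G0_def Ng_def by (rule sup_bound[OF p1 holg dgH that])
    define C where "C = norm (g 0) + 4 * G0 + 4 * Ng + 16 * pi * Ng"
    show "I_op_bounded_S2 p g"
      unfolding I_op_bounded_S2_def
    proof (intro exI[of _ C] ballI)
      fix f assume fS: "f \<in> S2_space p"
      define f1 where "f1 = deriv f"
      define f2 where "f2 = deriv f1"
      have holf: "f holomorphic_on ball 0 1" using fS by (simp add: S2_space_def)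
      have f2H: "f2 \<in> hardy_space p" using fS by (simp add: S2_space_def f1_def f2_def)
      then have bdd2: "bdd_above (hardy_mean p f2 ` {0<..<1})" by (simp add: hardy_space_def)
      have holf1: "f1 holomorphic_on ball 0 1" unfolding f1_def by (rule holomorphic_deriv[OF holf open_ball])
      have holf2: "f2 holomorphic_on ball 0 1" unfolding f2_def by (rule holomorphic_deriv[OF holf1 open_ball])
      define S2 where "S2 = (SUP r\<in>{0<..<1}. hardy_mean p f2 r)"
      define N2 where "N2 = hardy_norm p f2"
      have N2S: "N2 = S2 powr (1/p)" by (simp add: N2_def S2_def hardy_norm_def)
      have S20: "0 \<le> S2" unfolding S2_def by (rule sup_nonneg[OF holf2 p0 bdd2])
      have N20: "0 \<le> N2" by (simp add: N2S)
      define B where "B = norm (f1 0) + 4 * pi * N2"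
      have B0: "0 \<le> B" using N20 by (simp add: B_def)
      have f1b: "norm (f1 w) \<le> B" if "w \<in> ball 0 1" for w
        unfolding B_def N2_def f2_def by (rule sup_bound[OF p1 holf1 _ that]) (use f2H in \<open>simp add: f2_def\<close>)
      define \<Phi> where "\<Phi> = I_op g f"
      define \<psi> where "\<psi> = (\<lambda>w. f2 w * g w + f1 w * deriv g w)"
      have d\<Phi>: "(\<Phi> has_field_derivative f1 w * g w) (at w)" if "w \<in> ball 0 1" for w
        unfolding \<Phi>_def f1_def by (rule I_op_deriv[OF holf holg that])
      have hol\<Phi>: "\<Phi> holomorphic_on ball 0 1"
        unfolding holomorphic_on_open[OF open_ball] using d\<Phi> by blast
      have dd\<Phi>: "deriv (deriv \<Phi>) w = \<psi> w" if "w \<in> ball 0 1" for w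
      proof -
        have "((\<lambda>w. f1 w * g w) has_field_derivative \<psi> w) (at w)"
          unfolding \<psi>_def f2_def
          using DERIV_mult[OF holomorphic_derivI[OF holf1 open_ball that] holomorphic_derivI[OF holg open_ball that]]
          by (simp add: ac_simps)
        then have "(deriv \<Phi> has_field_derivative \<psi> w) (at w)"
          by (rule has_field_derivative_transform_within_open[OF _ open_ball that]) (use d\<Phi> DERIV_imp_deriv in \<open>force\<close>)
        then show ?thesis by (rule DERIV_imp_deriv)
      qed
      have hol\<psi>: "\<psi> holomorphic_on ball 0 1"
        unfolding \<psi>_def by (intro holomorphic_intros holf1 holf2 holg holdg)
      define A1 where "A1 = (2 * G0) powr p"
      define A2 where "A2 = (2 * B) powr p"
      have pt: "norm (\<psi> z) powr p \<le> A1 * norm (f2 z) powr p + A2 * norm (deriv g z) powr p"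
        if z: "z \<in> ball 0 1" for z
      proof -
        have "norm (\<psi> z) \<le> G0 * norm (f2 z) + B * norm (deriv g z)"
        proof -
          have "norm (\<psi> z) \<le> norm (f2 z) * norm (g z) + norm (f1 z) * norm (deriv g z)"
            unfolding \<psi>_def by (metis norm_mult norm_triangle_ineq)
          also have "\<dots> \<le> norm (f2 z) * G0 + B * norm (deriv g z)"
            using gb[OF z] f1b[OF z] by (intro add_mono mult_left_mono mult_right_mono) auto
          finally show ?thesis by (simp add: mult.commute)
        qed
        then have "norm (\<psi> z) powr p \<le> (G0 * norm (f2 z) + B * norm (deriv g z)) powr p"
          using p0 by (intro powr_mono2) auto
        also have "\<dots> \<le> 2 powr p * ((G0 * norm (f2 z)) powr p + (B * norm (deriv g z)) powr p)"
          using G00 B0 p0 by (intro powr_sum_le) auto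
        also have "\<dots> = A1 * norm (f2 z) powr p + A2 * norm (deriv g z) powr p"
          using G00 B0 by (simp add: A1_def A2_def powr_mult algebra_simps)
        finally show ?thesis .
      qed
      have A10: "0 \<le> A1" and A20: "0 \<le> A2" by (simp_all add: A1_def A2_def)
      have mb: "hardy_mean p \<psi> r \<le> A1 * S2 + A2 * Sg" if r: "r \<in> {0<..<1}" for r
      proof -
        have "hardy_mean p \<psi> r \<le> A1 * hardy_mean p f2 r + A2 * hardy_mean p (deriv g) r"
          by (rule mean_le_comb[OF hol\<psi> holf2 holdg p0 A10 A20 pt]) (use r in auto)
        also have "\<dots> \<le> A1 * S2 + A2 * Sg"
          unfolding S2_def Sg_def
          by (intro add_mono mult_left_mono cSUP_upper r bdd2 bddg A10 A20)
        finally show ?thesis .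
      qed
      have bdd\<psi>: "bdd_above (hardy_mean p \<psi> ` {0<..<1})" by (rule bdd_aboveI2[OF mb])
      have mean_eq: "hardy_mean p (deriv (deriv \<Phi>)) ` {0<..<1} = hardy_mean p \<psi> ` {0<..<1}"
        by (intro image_cong refl mean_cong) (use dd\<Phi> in auto)
      have "deriv (deriv \<Phi>) holomorphic_on ball 0 1" by (intro holomorphic_deriv hol\<Phi> open_ball)
      then have \<Phi>S: "\<Phi> \<in> S2_space p"
        by (simp add: S2_space_def hardy_space_def hol\<Phi> mean_eq bdd\<psi>)
      define S\<psi> where "S\<psi> = (SUP r\<in>{0<..<1}. hardy_mean p \<psi> r)"
      have S\<psi>0: "0 \<le> S\<psi>" unfolding S\<psi>_def by (rule sup_nonneg[OF hol\<psi> p0 bdd\<psi>])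
      have S\<psi>le: "S\<psi> \<le> A1 * S2 + A2 * Sg" unfolding S\<psi>_def by (rule cSUP_least) (use mb in auto)
      have hn_eq: "hardy_norm p (deriv (deriv \<Phi>)) = S\<psi> powr (1/p)"
        unfolding hardy_norm_def S\<psi>_def using mean_eq by simp
      have "S\<psi> powr (1/p) \<le> (A1 * S2 + A2 * Sg) powr (1/p)"
        using S\<psi>0 S\<psi>le p0 by (intro powr_mono2) auto
      also have "\<dots> \<le> 2 * ((A1 * S2) powr (1/p) + (A2 * Sg) powr (1/p))"
        using A10 A20 S20 Sg0 p0 p1 by (intro powr_sum_le_small) auto
      also have "(A1 * S2) powr (1/p) = 2 * G0 * N2"
        using G00 p0 by (simp add: A1_def N2S powr_mult powr_powr)
      also have "(A2 * Sg) powr (1/p) = 2 * B * Ng"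
        using B0 p0 by (simp add: A2_def NgS powr_mult powr_powr)
      finally have hn: "hardy_norm p (deriv (deriv \<Phi>)) \<le> 4 * G0 * N2 + 4 * B * Ng"
        unfolding hn_eq by simp
      have \<Phi>0: "\<Phi> 0 = 0" by (simp add: \<Phi>_def I_op_def)
      have d\<Phi>0: "deriv \<Phi> 0 = f1 0 * g 0" using d\<Phi>[of 0] by (simp add: DERIV_imp_deriv)
      have "S2_norm p \<Phi> \<le> norm (f1 0) * norm (g 0) + (4 * G0 * N2 + 4 * B * Ng)"
        using hn by (simp add: S2_norm_def \<Phi>0 d\<Phi>0 norm_mult)
      also have "\<dots> = norm (f1 0) * (norm (g 0) + 4 * Ng) + N2 * (4 * G0 + 16 * pi * Ng)"
        by (simp add: B_def algebra_simps)
      also have "\<dots> \<le> norm (f1 0) * C + N2 * C"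
        using Ng0 G00 N20 by (intro add_mono mult_left_mono) (auto simp: C_def)
      also have "\<dots> \<le> C * S2_norm p f"
      proof -
        have C0: "0 \<le> C" using Ng0 G00 by (simp add: C_def)
        have "S2_norm p f = norm (f 0) + norm (f1 0) + N2" by (simp add: S2_norm_def f1_def f2_def N2_def)
        then show ?thesis using C0 by (simp add: algebra_simps)
      qed
      finally show "I_op g f \<in> S2_space p \<and> S2_norm p (I_op g f) \<le> C * S2_norm p f"
        using \<Phi>S by (simp add: \<Phi>_def)
    qed
  }
qed

end
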